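(* Let $R$ be a finite chain ring with maximal ideal $\mathfrak{m}$, residue field $\mathbb{F}_q$, and natural projection $\pi:R\to\mathbb{F}_q$. Let $\lambda$ be a unit of $R$ with $\pi(\lambda)\neq\pi(\lambda)^{-1}$, and let $C$ be a free $\lambda$-constacyclic code of length $n$ over $R$ with $\Psi(C)=\langle F\rangle$, where $F$ divides $x^n-\lambda$. Then $C$ is an LCD code over $R$.
   Context: A finite chain ring is a finite commutative local ring whose ideals form a chain. A linear code $C\subseteq R^n$ is $\lambda$-constacyclic if $(\lambda c_{n-1},c_0,\dots,c_{n-2})\in C$ whenever $(c_0,\dots,c_{n-1})\in C$; free means free as an $R$-module. $\Psi:R^n\to R[x]/\langle x^n-\lambda\rangle$ is $(c_0,\dots,c_{n-1})\mapsto\sum c_ix^i$. $C$ is LCD if $C\cap C^\perp=\{\mathbf{0}\}$, where $C^\perp$ is the dual under the standard inner product $\sum_j u_jc_j$. *)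

theory Defs
  imports "HOL-Computational_Algebra.Polynomial"
begin

definition is_ideal :: "'a::comm_ring_1 set \<Rightarrow> bool" where
  "is_ideal I \<longleftrightarrow> 0 \<in> I \<and> (\<forall>x\<in>I. \<forall>y\<in>I. x + y \<in> I) \<and> (\<forall>r. \<forall>x\<in>I. r * x \<in> I)"

definition max_ideal :: "'a::comm_ring_1 set" where
  "max_ideal = {x. \<not> x dvd 1}"

definition finite_chain_ring :: "'a::comm_ring_1 itself \<Rightarrow> bool" where
  "finite_chain_ring _ \<longleftrightarrow> finite (UNIV :: 'a set) \<and> (0::'a) \<noteq> 1
     \<and> is_ideal (max_ideal :: 'a set)
     \<and> (\<forall>I J :: 'a set. is_ideal I \<longrightarrow> is_ideal J \<longrightarrow> I \<subseteq> J \<or> J \<subseteq> I)"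

(* Natural projection onto the residue field: pi a = pi b iff a - b in m.
   pi(lam) ~= pi(lam)^-1 means pi(lam) ~= pi(mu) where mu is the inverse of lam. *)
definition residue_ne_inverse :: "'a::comm_ring_1 \<Rightarrow> bool" where
  "residue_ne_inverse lam \<longleftrightarrow> (\<forall>mu. lam * mu = 1 \<longrightarrow> lam - mu \<notin> max_ideal)"

definition is_linear_code :: "nat \<Rightarrow> 'a::comm_ring_1 list set \<Rightarrow> bool" where
  "is_linear_code n C \<longleftrightarrow> (\<forall>c\<in>C. length c = n) \<and> replicate n 0 \<in> C
     \<and> (\<forall>u\<in>C. \<forall>v\<in>C. map2 (+) u v \<in> C) \<and> (\<forall>r. \<forall>u\<in>C. map ((*) r) u \<in> C)"

definition constacyclic :: "'a::comm_ring_1 \<Rightarrow> nat \<Rightarrow> 'a list set \<Rightarrow> bool" where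
  "constacyclic lam n C \<longleftrightarrow> is_linear_code n C \<and>
     (\<forall>c\<in>C. 0 < n \<longrightarrow> (lam * c ! (n - 1)) # take (n - 1) c \<in> C)"

definition lincomb :: "nat \<Rightarrow> (nat \<Rightarrow> 'a::comm_ring_1) \<Rightarrow> 'a list list \<Rightarrow> 'a list" where
  "lincomb n a B = map (\<lambda>j. \<Sum>i<length B. a i * (B ! i) ! j) [0..<n]"

definition free_code :: "nat \<Rightarrow> 'a::comm_ring_1 list set \<Rightarrow> bool" where
  "free_code n C \<longleftrightarrow> (\<exists>B. set B \<subseteq> C
     \<and> (\<forall>a. lincomb n a B = replicate n 0 \<longrightarrow> (\<forall>i<length B. a i = 0))
     \<and> (\<forall>c\<in>C. \<exists>a. c = lincomb n a B))"

(* Psi : R^n -> R[x]/<x^n - lam>; we represent classes by polynomials *)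
definition Psi :: "'a::comm_ring_1 list \<Rightarrow> 'a poly" where
  "Psi c = Poly c"

definition Psi_generated_by :: "'a::comm_ring_1 \<Rightarrow> nat \<Rightarrow> 'a list set \<Rightarrow> 'a poly \<Rightarrow> bool" where
  "Psi_generated_by lam n C F \<longleftrightarrow>
     C = {c. length c = n \<and> (\<exists>g h. Psi c = g * F + h * (monom 1 n - [:lam:]))}"

definition inner :: "nat \<Rightarrow> 'a::comm_ring_1 list \<Rightarrow> 'a list \<Rightarrow> 'a" where
  "inner n u c = (\<Sum>j<n. u ! j * c ! j)"

definition dual_code :: "nat \<Rightarrow> 'a::comm_ring_1 list set \<Rightarrow> 'a list set" where
  "dual_code n C = {u. length u = n \<and> (\<forall>c\<in>C. inner n u c = 0)}"

definition is_LCD :: "nat \<Rightarrow> 'a::comm_ring_1 list set \<Rightarrow> bool" where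
  "is_LCD n C \<longleftrightarrow> C \<inter> dual_code n C = {replicate n 0}"

end

theory Submission
  imports Defs
begin

definition good :: "'a::comm_ring_1 itself \<Rightarrow> bool" where
  "good _ \<longleftrightarrow> is_ideal (max_ideal::'a set) \<and> (0::'a) \<noteq> 1"

definition cls :: "'a::comm_ring_1 \<Rightarrow> 'a set" where
  "cls x = {y. y - x \<in> max_ideal}"

definition res_set :: "'a::comm_ring_1 set set" where
  "res_set = (if good TYPE('a) then range cls else {{}, UNIV})"

typedef (overloaded) ('a::comm_ring_1) res = "res_set :: 'a set set"
  unfolding res_set_def by (auto split: if_splits)

context
  fixes dummy :: "'a::comm_ring_1"
  assumes G: "good TYPE('a)"
begin

lemma m_ideal: "is_ideal (max_ideal::'a set)" using G by (simp add: good_def)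
lemma m_0: "(0::'a) \<in> max_ideal" using m_ideal by (simp add: is_ideal_def)
lemma m_add: "(x::'a) \<in> max_ideal \<Longrightarrow> y \<in> max_ideal \<Longrightarrow> x + y \<in> max_ideal"
  using m_ideal by (simp add: is_ideal_def)
lemma m_mult: "(x::'a) \<in> max_ideal \<Longrightarrow> r * x \<in> max_ideal"
  using m_ideal by (simp add: is_ideal_def)
lemma m_mult2: "(x::'a) \<in> max_ideal \<Longrightarrow> x * r \<in> max_ideal"
  using m_mult[of x r] by (simp add: mult.commute)
lemma m_uminus: "(x::'a) \<in> max_ideal \<Longrightarrow> - x \<in> max_ideal"
  using m_mult[of x "-1"] by simp
lemma m_diff: "(x::'a) \<in> max_ideal \<Longrightarrow> y \<in> max_ideal \<Longrightarrow> x - y \<in> max_ideal"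
  using m_add[of x "-y"] m_uminus[of y] by simp
lemma m_iff: "(x::'a) \<in> max_ideal \<longleftrightarrow> \<not> x dvd 1" by (simp add: max_ideal_def)
lemma one_notin: "(1::'a) \<notin> max_ideal" by (simp add: m_iff)

lemma cls_eq: "cls (x::'a) = cls y \<longleftrightarrow> x - y \<in> max_ideal"
proof
  assume "cls x = cls y"
  moreover have "x \<in> cls x" using m_0 by (simp add: cls_def)
  ultimately show "x - y \<in> max_ideal" by (simp add: cls_def)
next
  assume a: "x - y \<in> max_ideal"
  have "z - x \<in> max_ideal \<longleftrightarrow> z - y \<in> max_ideal" for z
  proof
    assume "z - x \<in> max_ideal" from m_add[OF this a] show "z - y \<in> max_ideal" by simp
  next
    assume "z - y \<in> max_ideal" from m_diff[OF this a] show "z - x \<in> max_ideal" by simp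
  qed
  then show "cls x = cls y" by (auto simp: cls_def)
qed

end

definition repr :: "'a::comm_ring_1 res \<Rightarrow> 'a" where
  "repr X = (SOME x. Rep_res X = cls x)"

definition inv_el :: "'a::comm_ring_1 \<Rightarrow> 'a" where
  "inv_el x = (if x dvd 1 then (SOME y. x * y = 1) else 0)"

definition resp :: "'a::comm_ring_1 \<Rightarrow> 'a res" where
  "resp x = Abs_res (cls x)"

instantiation res :: (comm_ring_1) field
begin
definition zero_res_def: "0 = Abs_res (if good TYPE('a) then cls 0 else {})"
definition one_res_def: "1 = Abs_res (if good TYPE('a) then cls 1 else UNIV)"
definition plus_res_def: "X + Y = Abs_res (if good TYPE('a) then cls (repr X + repr Y)
   else (Rep_res X - Rep_res Y) \<union> (Rep_res Y - Rep_res X))"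
definition uminus_res_def: "- X = Abs_res (if good TYPE('a) then cls (- repr X) else Rep_res X)"
definition minus_res_def: "X - Y = X + - (Y::'a res)"
definition times_res_def: "X * Y = Abs_res (if good TYPE('a) then cls (repr X * repr Y)
   else Rep_res X \<inter> Rep_res Y)"
definition inverse_res_def: "inverse X = Abs_res (if good TYPE('a) then cls (inv_el (repr X)) else Rep_res X)"
definition divide_res_def: "divide X Y = X * inverse (Y::'a res)"

lemma bad_Rep: "\<not> good TYPE('a) \<Longrightarrow> Rep_res (X::'a res) = {} \<or> Rep_res X = UNIV"
  using Rep_res[of X] by (simp add: res_set_def)

lemma bad_Abs: "\<not> good TYPE('a) \<Longrightarrow> Rep_res (Abs_res (S::'a set)) = S \<longleftrightarrow> S = {} \<or> S = UNIV"
  by (metis Abs_res_inverse bad_Rep insertCI res_set_def)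

lemma good_Rep: "good TYPE('a) \<Longrightarrow> Rep_res (X::'a res) = cls (repr X)"
proof -
  assume g: "good TYPE('a)"
  then have "\<exists>x. Rep_res X = cls x" using Rep_res[of X] by (auto simp: res_set_def)
  then show ?thesis unfolding repr_def by (rule someI_ex)
qed

lemma good_Abs: "good TYPE('a) \<Longrightarrow> Rep_res (Abs_res (cls (x::'a))) = cls x"
  by (simp add: Abs_res_inverse res_set_def)

lemma good_surj: "good TYPE('a) \<Longrightarrow> (X::'a res) = resp (repr X)"
  by (metis Rep_res_inverse good_Rep resp_def)

lemma resp_eq: "good TYPE('a) \<Longrightarrow> resp (x::'a) = resp y \<longleftrightarrow> x - y \<in> max_ideal"
  by (metis cls_eq good_Abs resp_def)

lemma repr_resp: "good TYPE('a) \<Longrightarrow> repr (resp (x::'a)) - x \<in> max_ideal"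
  by (metis good_surj resp_eq)

lemma resp_add: "good TYPE('a) \<Longrightarrow> resp (x::'a) + resp y = resp (x + y)"
proof -
  assume g: "good TYPE('a)"
  have "repr (resp x) + repr (resp y) - (x + y) = (repr (resp x) - x) + (repr (resp y) - y)" by simp
  also have "\<dots> \<in> max_ideal" using m_add[OF g repr_resp[OF g] repr_resp[OF g]] .
  finally show ?thesis using g by (simp add: plus_res_def resp_eq[symmetric] resp_def)
qed

lemma good_uminus: "good TYPE('a) \<Longrightarrow> - (X::'a res) = resp (- repr X)"
  by (simp add: uminus_res_def resp_def)

lemma resp_uminus: "good TYPE('a) \<Longrightarrow> - resp (x::'a) = resp (- x)"
proof -
  assume g: "good TYPE('a)"
  have "- repr (resp x) - (- x) = - (repr (resp x) - x)" by simp
  also have "\<dots> \<in> max_ideal" using m_uminus[OF g repr_resp[OF g]] .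
  finally have "resp (- repr (resp x)) = resp (- x)" using g by (simp add: resp_eq)
  then show ?thesis using good_uminus[OF g] by simp
qed

lemma resp_mult: "good TYPE('a) \<Longrightarrow> resp (x::'a) * resp y = resp (x * y)"
proof -
  assume g: "good TYPE('a)"
  define a where "a = repr (resp x)"
  define b where "b = repr (resp y)"
  have "a * b - x * y = (a - x) * b + x * (b - y)" by (simp add: algebra_simps)
  also have "\<dots> \<in> max_ideal" using m_add[OF g m_mult2[OF g] m_mult[OF g]] repr_resp[OF g]
    unfolding a_def b_def by blast
  finally show ?thesis using g by (simp add: times_res_def resp_eq[symmetric] resp_def a_def b_def)
qed

lemma inv_el: "(x::'a) dvd 1 \<Longrightarrow> x * inv_el x = 1"
  unfolding inv_el_def by (simp add: dvd_def) (metis (mono_tags) someI_ex)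

lemma resp_inverse: "good TYPE('a) \<Longrightarrow> inverse (resp (x::'a)) = resp (inv_el x)"
proof -
  assume g: "good TYPE('a)"
  define a where "a = repr (resp x)"
  have ax: "a - x \<in> max_ideal" using repr_resp[OF g] a_def by simp
  have "inv_el a - inv_el x \<in> max_ideal"
  proof (cases "x dvd 1")
    case True
    have "a dvd 1"
    proof (rule ccontr)
      assume "\<not> a dvd 1" then have "a \<in> max_ideal" by (simp add: max_ideal_def)
      from m_diff[OF g this ax] have "x \<in> max_ideal" by simp
      with True show False by (simp add: max_ideal_def)
    qed
    have "inv_el a - inv_el x = inv_el a * inv_el x * (x - a)"
      using inv_el[OF True] inv_el[OF \<open>a dvd 1\<close>] by (simp add: algebra_simps)
         (metis mult.assoc mult.commute mult.left_neutral)
    also have "\<dots> \<in> max_ideal" using m_mult[OF g m_uminus[OF g ax]] by simp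
    finally show ?thesis .
  next
    case False
    then have "x \<in> max_ideal" by (simp add: max_ideal_def)
    from m_add[OF g ax this] have "a \<in> max_ideal" by simp
    then have "\<not> a dvd 1" by (simp add: max_ideal_def)
    with False show ?thesis by (simp add: inv_el_def m_0[OF g])
  qed
  then show ?thesis using g by (simp add: inverse_res_def resp_eq[symmetric] resp_def a_def)
qed

lemma resp_0: "good TYPE('a) \<Longrightarrow> resp (0::'a) = 0"
  by (simp add: zero_res_def resp_def)
lemma resp_1: "good TYPE('a) \<Longrightarrow> resp (1::'a) = 1"
  by (simp add: one_res_def resp_def)

lemmas resp_ops = resp_add resp_uminus resp_mult resp_inverse resp_0 resp_1

lemma bad_ops:
  assumes "\<not> good TYPE('a)"
  shows "Rep_res ((X::'a res) + Y) = (Rep_res X - Rep_res Y) \<union> (Rep_res Y - Rep_res X)"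
    "Rep_res (X * Y) = Rep_res X \<inter> Rep_res Y"
    "Rep_res (- X) = Rep_res X"
    "Rep_res (inverse X) = Rep_res X"
    "Rep_res (0::'a res) = {}"
    "Rep_res (1::'a res) = UNIV"
  using assms bad_Rep[OF assms, of X] bad_Rep[OF assms, of Y]
  by (auto simp: plus_res_def times_res_def uminus_res_def inverse_res_def zero_res_def
      one_res_def bad_Abs)

lemma gsurj3: "good TYPE('a) \<Longrightarrow> \<exists>x y z. (a::'a res) = resp x \<and> (b::'a res) = resp y \<and> (c::'a res) = resp z"
  using good_surj[of a] good_surj[of b] good_surj[of c] by blast

lemma ax1: "(a::'a res) + b + c = a + (b + c)"
proof (cases "good TYPE('a)")
  case True
  then obtain x y z where "a = resp x" "b = resp y" "c = resp z" using good_surj[OF True, of a] good_surj[OF True, of b] good_surj[OF True, of c] by blast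
  then show ?thesis using True by (simp add: resp_add resp_mult resp_uminus algebra_simps flip: resp_0 resp_1)
next
  case False
  then show ?thesis using bad_Rep[OF False, of a] bad_Rep[OF False, of b] bad_Rep[OF False, of c]
    by (simp add: Rep_res_inject[symmetric] bad_ops; blast)
qed
lemma ax2: "(a::'a res) + b = b + a"
proof (cases "good TYPE('a)")
  case True
  then obtain x y where "a = resp x" "b = resp y" using good_surj[OF True, of a] good_surj[OF True, of b] by blast
  then show ?thesis using True by (simp add: resp_add resp_mult resp_uminus algebra_simps flip: resp_0 resp_1)
next
  case False
  then show ?thesis using bad_Rep[OF False, of a] bad_Rep[OF False, of b]
    by (simp add: Rep_res_inject[symmetric] bad_ops; blast)
qed
lemma ax3: "0 + (a::'a res) = a"
proof (cases "good TYPE('a)")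
  case True
  then obtain x where "a = resp x" using good_surj[OF True, of a] by blast
  then show ?thesis using True by (simp add: resp_add resp_mult resp_uminus algebra_simps flip: resp_0 resp_1)
next
  case False
  then show ?thesis using bad_Rep[OF False, of a]
    by (simp add: Rep_res_inject[symmetric] bad_ops; blast)
qed
lemma ax4: "- (a::'a res) + a = 0"
proof (cases "good TYPE('a)")
  case True
  then obtain x where "a = resp x" using good_surj[OF True, of a] by blast
  then show ?thesis using True by (simp add: resp_add resp_mult resp_uminus algebra_simps flip: resp_0 resp_1)
next
  case False
  then show ?thesis using bad_Rep[OF False, of a]
    by (simp add: Rep_res_inject[symmetric] bad_ops; blast)
qed
lemma ax5: "(a::'a res) * b * c = a * (b * c)"
proof (cases "good TYPE('a)")
  case True
  then obtain x y z where "a = resp x" "b = resp y" "c = resp z" using good_surj[OF True, of a] good_surj[OF True, of b] good_surj[OF True, of c] by blast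
  then show ?thesis using True by (simp add: resp_add resp_mult resp_uminus algebra_simps flip: resp_0 resp_1)
next
  case False
  then show ?thesis using bad_Rep[OF False, of a] bad_Rep[OF False, of b] bad_Rep[OF False, of c]
    by (simp add: Rep_res_inject[symmetric] bad_ops; blast)
qed
lemma ax6: "(a::'a res) * b = b * a"
proof (cases "good TYPE('a)")
  case True
  then obtain x y where "a = resp x" "b = resp y" using good_surj[OF True, of a] good_surj[OF True, of b] by blast
  then show ?thesis using True by (simp add: resp_add resp_mult resp_uminus algebra_simps flip: resp_0 resp_1)
next
  case False
  then show ?thesis using bad_Rep[OF False, of a] bad_Rep[OF False, of b]
    by (simp add: Rep_res_inject[symmetric] bad_ops; blast)
qed
lemma ax7: "1 * (a::'a res) = a"
proof (cases "good TYPE('a)")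
  case True
  then obtain x where "a = resp x" using good_surj[OF True, of a] by blast
  then show ?thesis using True by (simp add: resp_add resp_mult resp_uminus algebra_simps flip: resp_0 resp_1)
next
  case False
  then show ?thesis using bad_Rep[OF False, of a]
    by (simp add: Rep_res_inject[symmetric] bad_ops; blast)
qed
lemma ax8: "((a::'a res) + b) * c = a * c + b * c"
proof (cases "good TYPE('a)")
  case True
  then obtain x y z where "a = resp x" "b = resp y" "c = resp z" using good_surj[OF True, of a] good_surj[OF True, of b] good_surj[OF True, of c] by blast
  then show ?thesis using True by (simp add: resp_add resp_mult resp_uminus algebra_simps flip: resp_0 resp_1)
next
  case False
  then show ?thesis using bad_Rep[OF False, of a] bad_Rep[OF False, of b] bad_Rep[OF False, of c]
    by (simp add: Rep_res_inject[symmetric] bad_ops; blast)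
qed
lemma ax9: "(0::'a res) \<noteq> 1"
proof (cases "good TYPE('a)")
  case True
  have "- 1 \<notin> (max_ideal::'a set)" using one_notin[OF True] m_uminus[OF True, of "-1::'a"] by auto
  then have "resp (0::'a) \<noteq> resp 1" using resp_eq[OF True, of 0 1] by simp
  then show ?thesis using resp_0[OF True] resp_1[OF True] by simp
next
  case False then show ?thesis using bad_ops(5,6)[OF False] by force
qed
lemma ax10: "(a::'a res) \<noteq> 0 \<Longrightarrow> inverse a * a = 1"
proof (cases "good TYPE('a)")
  case True
  assume a: "a \<noteq> 0"
  obtain x where x: "a = resp x" using good_surj[OF True] by blast
  have "\<not> x \<in> max_ideal" using a x resp_eq[OF True, of x 0] by (simp add: resp_0[symmetric] True)
  then have "x dvd 1" by (simp add: max_ideal_def)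
  then show ?thesis using x True inv_el[of x] by (simp add: resp_ops mult.commute)
next
  case False assume a: "a \<noteq> 0"
  then have "Rep_res a \<noteq> {}" using bad_ops(5)[OF False] Rep_res_inject by metis
  then show ?thesis using False bad_Rep[OF False, of a]
    by (simp add: Rep_res_inject[symmetric] bad_ops)
qed
lemma ax11: "inverse (0::'a res) = 0"
proof (cases "good TYPE('a)")
  case True
  then show ?thesis using resp_inverse[OF True, of 0] resp_0[OF True]
    by (simp add: inv_el_def m_0[OF True] max_ideal_def[symmetric])
next
  case False then show ?thesis by (simp add: Rep_res_inject[symmetric] bad_ops)
qed

instance
  by standard (assumption | rule ax1 ax2 ax3 ax4 ax5 ax6 ax7 ax8 ax9 ax10 ax11 minus_res_def divide_res_def)+
end

lemma coeff_Wst: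
  fixes W :: "'k::field poly"
  assumes "degree W < n"
  shows "coeff (monom 1 (n - 1 - degree W) * reflect_poly W) i = (if i \<le> n - 1 then coeff W (n - 1 - i) else 0)"
  using assms
  by (auto simp: coeff_monom_mult coeff_reflect_poly coeff_eq_0)

lemma inner_coeff:
  fixes W q :: "'k::field poly"
  assumes "degree W < n" "degree q < n"
  shows "(\<Sum>j<n. coeff W j * coeff q j) = coeff (monom 1 (n - 1 - degree W) * reflect_poly W * q) (n - 1)"
proof -
  have "coeff (monom 1 (n - 1 - degree W) * reflect_poly W * q) (n - 1)
     = (\<Sum>i\<le>n-1. coeff W (n - 1 - i) * coeff q (n - 1 - i))"
    by (subst coeff_mult, rule sum.cong[OF refl]) (use coeff_Wst[OF assms(1)] in auto)
  also have "\<dots> = (\<Sum>i<n. coeff W (n - Suc i) * coeff q (n - Suc i))"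
    using assms by (intro sum.cong) auto
  also have "\<dots> = (\<Sum>j<n. coeff W j * coeff q j)"
    by (rule sum.nat_diff_reindex)
  finally show ?thesis by simp
qed

lemma degree_P:
  assumes "n > 0"
  shows "degree (monom 1 n - [:l::'k::field:]) = n"
proof -
  have "coeff (monom 1 n - [:l:]) n = 1" using assms by (cases n) auto
  moreover have "degree (monom 1 n - [:l:]) \<le> n"
    by (rule degree_diff_le) (auto simp: degree_monom_le)
  ultimately show ?thesis by (metis le_antisym le_degree one_neq_zero)
qed

lemma coeff_mod_P:
  fixes B :: "'k::field poly"
  assumes n: "n > 0" and dB: "degree B < 2 * n - 1"
  shows "coeff (B mod (monom 1 n - [:l:])) (n - 1) = coeff B (n - 1)"
proof -
  define P where "P = monom 1 n - [:l:]"
  have dP: "degree P = n" using degree_P[OF n] P_def by simp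
  then have P0: "P \<noteq> 0" using n by auto
  define Q where "Q = B div P"
  have B: "B = Q * P + B mod P" by (simp add: Q_def)
  have "coeff (Q * P) (n - 1) = 0"
  proof (cases "Q = 0")
    case False
    have "degree (B mod P) < n \<or> B mod P = 0" using degree_mod_less'[OF P0] dP by blast
    then have dm: "degree (B mod P) < 2 * n - 1" using n by auto
    have "Q * P = B - B mod P" using B by (metis add_diff_cancel)
    then have "degree (Q * P) \<le> max (degree B) (degree (B mod P))" by (metis degree_diff_le_max)
    then have "degree (Q * P) < 2 * n - 1" using dB dm by simp
    then have dQ: "degree Q < n - 1" using degree_mult_eq[OF False P0] dP by simp
    have "coeff (Q * P) (n - 1) = coeff (Q * monom 1 n) (n - 1) - l * coeff Q (n - 1)"
      by (simp add: P_def algebra_simps)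
    also have "coeff (Q * monom 1 n) (n - 1) = 0"
      using n by (simp add: mult.commute[of Q] coeff_monom_mult)
    also have "coeff Q (n - 1) = 0" using dQ by (simp add: coeff_eq_0)
    finally show ?thesis by simp
  qed simp
  then show ?thesis by (subst (2) B) (simp add: P_def)
qed

lemma reflect_P:
  assumes n: "n > 0"
  shows "reflect_poly (monom 1 n - [:l::'k::field:]) + smult l (monom 1 n - [:l:]) = [:1 - l * l:]"
proof (rule poly_eqI)
  fix i
  have dP: "degree (monom 1 n - [:l:]) = n" using degree_P[OF n] .
  show "coeff (reflect_poly (monom 1 n - [:l:]) + smult l (monom 1 n - [:l:])) i = coeff [:1 - l * l:] i"
    using n by (auto simp: coeff_reflect_poly dP coeff_monom coeff_pCons split: nat.splits)
qed

lemma field_lemma: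
  fixes l :: "'k::field" and f h W :: "'k poly"
  assumes n: "n > 0" and l0: "l \<noteq> 0" and l2: "l * l \<noteq> 1"
    and fh: "f * h = monom 1 n - [:l:]"
    and dW: "degree W < n" and fW: "f dvd W"
    and orth: "\<forall>k<n. (\<Sum>j<n. coeff W j * coeff ((monom 1 k * f) mod (monom 1 n - [:l:])) j) = 0"
  shows "W = 0"
proof (rule ccontr)
  assume W0: "W \<noteq> 0"
  define P where "P = monom 1 n - [:l:]"
  have dP: "degree P = n" using degree_P[OF n] P_def by simp
  then have P0: "P \<noteq> 0" using n by auto
  define X where "X = monom 1 (n - 1 - degree W) * reflect_poly W"
  have X0: "X \<noteq> 0" using W0 by (simp add: X_def)
  have dX: "degree X \<le> n - 1"
  proof -
    have "degree X \<le> degree (monom (1::'k) (n - 1 - degree W)) + degree (reflect_poly W)"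
      unfolding X_def by (rule degree_mult_le)
    then show ?thesis using degree_reflect_poly_le[of W] dW by (simp add: degree_monom_eq)
  qed
  have dmod: "degree (q mod P) < n" for q
    using degree_mod_less'[OF P0, of q] dP n by (cases "q mod P = 0") auto
  define A where "A = (X * f) mod P"
  have cA: "coeff ((monom 1 k * A) mod P) (n - 1) = 0" if k: "k < n" for k
  proof -
    define q where "q = (monom 1 k * f) mod P"
    have "0 = (\<Sum>j<n. coeff W j * coeff q j)" using orth k by (simp add: q_def P_def)
    also have "\<dots> = coeff (X * q) (n - 1)"
      using inner_coeff[OF dW dmod[of "monom 1 k * f"]] by (simp add: X_def q_def)
    also have "\<dots> = coeff ((X * q) mod P) (n - 1)"
    proof -
      have "degree (X * q) \<le> degree X + degree q" by (rule degree_mult_le)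
      also have "\<dots> < 2 * n - 1" using dX dmod[of "monom 1 k * f"] n by (simp add: q_def)
      finally show ?thesis using coeff_mod_P[OF n, of "X * q" l] by (simp add: P_def)
    qed
    also have "(X * q) mod P = (monom 1 k * A) mod P"
      unfolding q_def A_def by (simp add: mod_mult_right_eq mult.left_commute[of X])
    finally show ?thesis by simp
  qed
  have A0: "A = 0"
  proof (rule ccontr)
    assume "A \<noteq> 0"
    have dA: "degree A < n" using dmod A_def by simp
    define k where "k = n - 1 - degree A"
    have dkA: "degree (monom 1 k * A) = n - 1"
      using \<open>A \<noteq> 0\<close> dA by (simp add: degree_mult_eq degree_monom_eq k_def)
    then have "(monom 1 k * A) mod P = monom 1 k * A"
      using dP n by (intro mod_poly_less) simp
    then have "coeff (monom 1 k * A) (n - 1) = 0" using cA[of k] k_def n by simp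
    moreover have "coeff (monom 1 k * A) (n - 1) = lead_coeff A"
      using dA by (simp add: coeff_monom_mult k_def)
    ultimately show False using \<open>A \<noteq> 0\<close> by simp
  qed
  then have "P dvd X * f" unfolding A_def by (simp add: mod_eq_0_iff_dvd)
  then have "f * h dvd f * X" using fh by (simp add: P_def mult.commute)
  moreover have f0: "f \<noteq> 0" using fh P0 P_def by auto
  ultimately have hX: "h dvd X" by simp
  have h0: "h \<noteq> 0" using fh P0 P_def by auto
  have "coeff (f * h) 0 = - l" using fh n by simp
  then have c0: "coeff f 0 \<noteq> 0" "coeff h 0 \<noteq> 0" using l0 by (auto simp: coeff_mult_0)
  have deg: "degree f + degree h = n" using degree_mult_eq[OF f0 h0] fh dP P_def by simp
  obtain g where g: "W = f * g" using fW by blast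
  have "reflect_poly W = reflect_poly f * reflect_poly g" using g by (simp add: reflect_poly_mult)
  then have rfX: "reflect_poly f dvd X" unfolding X_def by simp
  have rP: "reflect_poly P = reflect_poly f * reflect_poly h" using fh unfolding P_def by (metis reflect_poly_mult)
  have key: "reflect_poly P + smult l P = [:1 - l * l:]" using reflect_P[OF n] P_def by simp
  have fhP: "f * h = P" using fh P_def by simp
  obtain u where u: "X = h * u" using hX by blast
  obtain v where v: "X = reflect_poly f * v" using rfX by blast
  have "smult (1 - l * l) X = (reflect_poly P + smult l P) * X" using key by simp
  also have "\<dots> = reflect_poly f * reflect_poly h * X + smult l (f * h * X)"
    by (simp add: rP fhP distrib_right)
  also have "\<dots> = (h * reflect_poly f) * (reflect_poly h * u + smult l (f * v))"
  proof -
    have 1: "reflect_poly f * reflect_poly h * X = (h * reflect_poly f) * (reflect_poly h * u)"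
      using u by (simp add: ac_simps)
    have 2: "smult l (f * h * X) = (h * reflect_poly f) * smult l (f * v)"
      using v by (simp add: ac_simps)
    show ?thesis unfolding 1 2 by (simp add: distrib_left)
  qed
  finally have "h * reflect_poly f dvd smult (1 - l * l) X" by (rule dvdI)
  then have dv: "h * reflect_poly f dvd X" using l2 by (simp add: dvd_smult_iff)
  have "degree (h * reflect_poly f) = n"
    using deg c0 h0 f0 by (simp add: degree_mult_eq)
  moreover have "degree (h * reflect_poly f) \<le> degree X" using dvd_imp_degree_le[OF dv X0] .
  ultimately show False using dX n by simp
qed

lemma resp_diff: "good TYPE('a) \<Longrightarrow> resp (x::'a::comm_ring_1) - resp y = resp (x - y)"
proof -
  assume g: "good TYPE('a)"
  have "resp (x - y) = resp (x + - y)" by simp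
  also have "\<dots> = resp x + - resp y" using g by (simp only: resp_add resp_uminus)
  finally show ?thesis by simp
qed

lemma resp_sum: "good TYPE('a) \<Longrightarrow> resp (\<Sum>i\<in>A. g i :: 'a::comm_ring_1) = (\<Sum>i\<in>A. resp (g i))"
  by (induct A rule: infinite_finite_induct) (simp_all add: resp_0 resp_add[symmetric])

lemma resp_zero_iff: "good TYPE('a) \<Longrightarrow> resp (x::'a::comm_ring_1) = 0 \<longleftrightarrow> x \<in> max_ideal"
  using resp_eq[of x 0] resp_0 by fastforce

lemma coeff_mp: "good TYPE('a) \<Longrightarrow> coeff (map_poly resp p) i = resp (coeff (p::'a::comm_ring_1 poly) i)"
  by (simp add: coeff_map_poly resp_0)

lemma mp_mult: "good TYPE('a) \<Longrightarrow> map_poly resp (p * q) = map_poly resp p * map_poly resp (q::'a::comm_ring_1 poly)"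
  by (rule poly_eqI) (simp add: coeff_mp coeff_mult resp_sum resp_mult[symmetric])

lemma mp_add: "good TYPE('a) \<Longrightarrow> map_poly resp (p + q) = map_poly resp p + map_poly resp (q::'a::comm_ring_1 poly)"
  by (rule poly_eqI) (simp add: coeff_mp resp_add)

lemma mp_diff: "good TYPE('a) \<Longrightarrow> map_poly resp (p - q) = map_poly resp p - map_poly resp (q::'a::comm_ring_1 poly)"
  by (rule poly_eqI) (simp add: coeff_mp resp_diff)

lemma mp_monom: "good TYPE('a) \<Longrightarrow> map_poly resp (monom (c::'a::comm_ring_1) k) = monom (resp c) k"
  by (rule poly_eqI) (simp add: coeff_mp coeff_monom resp_0)

lemma mp_const: "good TYPE('a) \<Longrightarrow> map_poly resp [:c::'a::comm_ring_1:] = [:resp c:]"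
  by (rule poly_eqI) (simp add: coeff_mp coeff_pCons resp_0 split: nat.splits)

lemma mp_dvd: "good TYPE('a) \<Longrightarrow> p dvd (q::'a::comm_ring_1 poly) \<Longrightarrow> map_poly resp p dvd map_poly resp q"
  by (auto simp: dvd_def mp_mult)

lemma degree_mp: "good TYPE('a) \<Longrightarrow> degree (map_poly resp (p::'a::comm_ring_1 poly)) \<le> degree p"
  by (rule degree_le) (simp add: coeff_mp coeff_eq_0 resp_0)

lemma monic_divmod:
  fixes P :: "'a::comm_ring_1 poly"
  assumes lc: "coeff P (degree P) = 1" and dP: "degree P > 0"
  shows "\<exists>q r. B = q * P + r \<and> degree r < degree P"
proof (induction "degree B" arbitrary: B rule: less_induct)
  case less
  show ?case
  proof (cases "degree B < degree P")
    case True
    then show ?thesis by (intro exI[of _ 0] exI[of _ B]) simp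
  next
    case False
    define k where "k = degree B - degree P"
    define c where "c = coeff B (degree B)"
    define B' where "B' = B - monom c k * P"
    have d1: "degree (monom c k * P) \<le> degree B"
    proof -
      have "degree (monom c k * P) \<le> degree (monom c k) + degree P" by (rule degree_mult_le)
      also have "\<dots> \<le> k + degree P" using degree_monom_le[of c k] by simp
      finally show ?thesis using False k_def by simp
    qed
    have c1: "coeff (monom c k * P) (degree B) = c"
      using False lc by (simp add: coeff_monom_mult k_def)
    have dB': "degree B' \<le> degree B"
      unfolding B'_def by (rule order.trans[OF degree_diff_le_max]) (simp add: d1)
    have cB': "coeff B' (degree B) = 0" unfolding B'_def using c1 c_def by simp
    have "degree B' < degree B"
    proof (rule ccontr)
      assume "\<not> degree B' < degree B"
      then have "degree B' = degree B" using dB' by simp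
      then have "coeff B' (degree B') = 0" using cB' by simp
      then have "B' = 0" by simp
      then show False using \<open>degree B' = degree B\<close> False dP by simp
    qed
    from less[OF this] obtain q r where qr: "B' = q * P + r" "degree r < degree P" by blast
    have "B = (q + monom c k) * P + r" using qr(1) unfolding B'_def by (simp add: algebra_simps)
    then show ?thesis using qr(2) by blast
  qed
qed

lemma Poly_coeffs_n:
  assumes "degree (r::'a::comm_ring_1 poly) < n"
  shows "Poly (map (coeff r) [0..<n]) = r"
  by (rule poly_eqI) (use assms in \<open>auto simp: nth_default_def coeff_eq_0\<close>)

lemma fcr_good: "finite_chain_ring TYPE('a::comm_ring_1) \<Longrightarrow> good TYPE('a)"
  by (simp add: finite_chain_ring_def good_def)

lemma ideal_range: "is_ideal (range ((*) (a::'a::comm_ring_1)))"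
  unfolding is_ideal_def
proof (intro conjI ballI allI)
  show "0 \<in> range ((*) a)" by (rule range_eqI[of _ _ 0]) simp
next
  fix x y assume "x \<in> range ((*) a)" "y \<in> range ((*) a)"
  then obtain r s where "x = a * r" "y = a * s" by auto
  then show "x + y \<in> range ((*) a)" by (intro range_eqI[of _ _ "r + s"]) (simp add: distrib_left)
next
  fix t x assume "x \<in> range ((*) a)"
  then obtain r where "x = a * r" by auto
  then show "t * x \<in> range ((*) a)" by (intro range_eqI[of _ _ "t * r"]) (simp add: mult.left_commute)
qed

lemma principal:
  assumes fcr: "finite_chain_ring TYPE('a::comm_ring_1)" and I: "is_ideal (I::'a set)"
  shows "\<exists>a\<in>I. I = range ((*) a)"
proof -
  have fin: "finite (UNIV::'a set)" using fcr by (simp add: finite_chain_ring_def)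
  have chain: "\<And>J K::'a set. is_ideal J \<Longrightarrow> is_ideal K \<Longrightarrow> J \<subseteq> K \<or> K \<subseteq> J"
    using fcr by (simp add: finite_chain_ring_def)
  have I0: "0 \<in> I" using I by (simp add: is_ideal_def)
  have Imul: "\<And>r x. x \<in> I \<Longrightarrow> r * x \<in> I" using I by (simp add: is_ideal_def)
  have bnd: "card (range ((*) y)) < Suc (card (UNIV::'a set))" for y :: 'a
    using card_mono[OF fin subset_UNIV, of "range ((*) y)"] by (rule le_imp_less_Suc)
  have bnd2: "\<forall>y. y \<in> I \<longrightarrow> card (range ((*) y)) < Suc (card (UNIV::'a set))"
    using bnd by simp
  have "\<exists>x. x \<in> I \<and> (\<forall>y. y \<in> I \<longrightarrow> card (range ((*) y)) \<le> card (range ((*) x)))"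
    by (rule Lattices_Big.ex_has_greatest_nat[of "\<lambda>x. x \<in> I", OF I0 bnd2])
  then obtain a where a: "a \<in> I" and amax: "\<And>y. y \<in> I \<Longrightarrow> card (range ((*) y)) \<le> card (range ((*) a))"
    by blast
  have "I = range ((*) a)"
  proof
    show "range ((*) a) \<subseteq> I"
    proof
      fix y assume "y \<in> range ((*) a)"
      then obtain r where "y = a * r" by auto
      moreover have "a * r = r * a" by (rule mult.commute)
      ultimately show "y \<in> I" using Imul[OF a, of r] by argo
    qed
    show "I \<subseteq> range ((*) a)"
    proof
      fix x assume x: "x \<in> I"
      have xr: "x \<in> range ((*) x)" by (rule range_eqI[of _ _ 1]) simp
      from chain[OF ideal_range ideal_range, of x a] show "x \<in> range ((*) a)"
      proof
        assume "range ((*) x) \<subseteq> range ((*) a)" with xr show ?thesis by blast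
      next
        assume sub: "range ((*) a) \<subseteq> range ((*) x)"
        have fx: "finite (range ((*) x))" using finite_subset[OF subset_UNIV fin] .
        have "card (range ((*) x)) \<le> card (range ((*) a))" using amax[OF x] .
        then have "card (range ((*) a)) = card (range ((*) x))"
          using card_mono[OF fx sub] by (rule antisym[rotated])
        then have "range ((*) a) = range ((*) x)"
          by (rule card_subset_eq[OF fx sub])
        then show ?thesis using xr by (rule ssubst)
      qed
    qed
  qed
  with a show ?thesis by blast
qed

lemma nilp:
  assumes fcr: "finite_chain_ring TYPE('a::comm_ring_1)" and gm: "(g::'a) \<in> max_ideal"
  shows "\<exists>k. g ^ k = 0"
proof -
  have G: "good TYPE('a)" using fcr by (rule fcr_good)
  have fin: "finite (UNIV::'a set)" using fcr by (simp add: finite_chain_ring_def)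
  have "\<not> inj (\<lambda>k::nat. g ^ k)"
  proof
    assume "inj (\<lambda>k::nat. g ^ k)"
    then have "finite (UNIV::nat set)"
      using finite_imageD[of "\<lambda>k::nat. g ^ k" UNIV] finite_subset[OF subset_UNIV fin] by blast
    then show False by simp
  qed
  then obtain i j where ij: "i \<noteq> j" "g ^ i = g ^ j" unfolding inj_def by blast
  have "\<exists>i j. i < j \<and> g ^ i = g ^ j" using ij by (metis linorder_neqE_nat)
  then obtain i j where ij: "i < j" "g ^ i = g ^ j" by blast
  define t where "t = j - i"
  have t0: "t > 0" using ij t_def by simp
  have gt: "g ^ t \<in> max_ideal"
  proof -
    obtain t' where "t = Suc t'" using t0 by (cases t) auto
    then have "g ^ t = g ^ t' * g" by (simp add: power_Suc2)
    then show ?thesis using m_mult[OF G gm, of "g ^ t'"] by (rule ssubst)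
  qed
  have u: "(1 - g ^ t) dvd 1"
  proof (rule ccontr)
    assume "\<not> (1 - g ^ t) dvd 1"
    then have "1 - g ^ t \<in> max_ideal" by (simp add: max_ideal_def)
    from m_add[OF G this gt] show False using one_notin[OF G] by simp
  qed
  have jt: "j = i + t" using ij(1) t_def by simp
  have "g ^ j = g ^ i * g ^ t" unfolding jt by (rule power_add)
  then have e: "g ^ i * (1 - g ^ t) = 0" using ij by (simp add: algebra_simps)
  from u obtain v where v: "1 = (1 - g ^ t) * v" by (auto simp: dvd_def)
  have "g ^ i = g ^ i * ((1 - g ^ t) * v)" using v by simp
  also have "\<dots> = g ^ i * (1 - g ^ t) * v" by (rule mult.assoc[symmetric])
  finally have "g ^ i = g ^ i * (1 - g ^ t) * v" .
  then show ?thesis using e by auto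
qed

lemma lin_len: "is_linear_code n C \<Longrightarrow> c \<in> C \<Longrightarrow> length c = n"
  by (simp add: is_linear_code_def)
lemma lin_smul: "is_linear_code n C \<Longrightarrow> c \<in> C \<Longrightarrow> map ((*) r) c \<in> C"
  by (simp add: is_linear_code_def)
lemma lin_add: "is_linear_code n C \<Longrightarrow> u \<in> C \<Longrightarrow> v \<in> C \<Longrightarrow> map2 (+) u v \<in> C"
  by (simp add: is_linear_code_def)
lemma lin_zero: "is_linear_code n C \<Longrightarrow> replicate n 0 \<in> C"
  by (simp add: is_linear_code_def)

lemma lincomb_in:
  assumes L: "is_linear_code n C" and B: "set B \<subseteq> C"
  shows "lincomb n a B \<in> C"
proof -
  have "m \<le> length B \<Longrightarrow> map (\<lambda>j. \<Sum>i<m. a i * B ! i ! j) [0..<n] \<in> C" for m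
  proof (induction m)
    case 0
    then show ?case using lin_zero[OF L] by (simp add: map_replicate_const)
  next
    case (Suc m)
    have prev: "map (\<lambda>j. \<Sum>i<m. a i * B ! i ! j) [0..<n] \<in> C" using Suc by simp
    have Bm: "B ! m \<in> C" using Suc.prems B by (simp add: subset_iff)
    have lBm: "length (B ! m) = n" using lin_len[OF L Bm] .
    have sm: "map ((*) (a m)) (B ! m) \<in> C" using lin_smul[OF L Bm] .
    have "map2 (+) (map (\<lambda>j. \<Sum>i<m. a i * B ! i ! j) [0..<n]) (map ((*) (a m)) (B ! m))
        = map (\<lambda>j. \<Sum>i<Suc m. a i * B ! i ! j) [0..<n]"
      by (rule nth_equalityI) (simp_all add: lBm)
    with lin_add[OF L prev sm] show ?case by simp
  qed
  then show ?thesis unfolding lincomb_def by simp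
qed

lemma lincomb_scale: "map ((*) s) (lincomb n a B) = lincomb n (\<lambda>i. s * a i) B"
  by (simp add: lincomb_def sum_distrib_left mult.assoc)

lemma lincomb_cong: "(\<And>i. i < length B \<Longrightarrow> a i = b i) \<Longrightarrow> lincomb n a B = lincomb n b B"
  by (auto simp: lincomb_def intro!: sum.cong)

lemma length_lincomb: "length (lincomb n a B) = n"
  by (simp add: lincomb_def)

lemma inner_scale: "length u = n \<Longrightarrow> inner n (map ((*) s) u) v = s * inner n u v"
  by (simp add: inner_def sum_distrib_left mult.assoc)

lemma dual_scale: "u \<in> dual_code n C \<Longrightarrow> map ((*) s) u \<in> dual_code n C"
  by (simp add: dual_code_def inner_scale)

lemma degree_Pm:
  assumes "n > 0" "(0::'a::comm_ring_1) \<noteq> 1"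
  shows "degree (monom 1 n - [:l::'a:]) = n" "coeff (monom 1 n - [:l:]) n = 1"
proof -
  show c: "coeff (monom 1 n - [:l:]) n = 1" using assms by (cases n) auto
  have "degree (monom 1 n - [:l:]) \<le> n"
    by (rule order.trans[OF degree_diff_le_max]) (auto simp: degree_monom_le)
  then show "degree (monom 1 n - [:l:]) = n" using le_degree[of _ n] c assms(2)
    by (metis le_antisym)
qed

lemma map_times0: "map ((*) (0::'a::comm_ring_1)) c = replicate (length c) 0"
  by (induct c) simp_all

theorem corollary4p8:
  fixes lam :: "'a::comm_ring_1" and n :: nat and C :: "'a list set" and F :: "'a poly"
  assumes "finite_chain_ring TYPE('a)"
    and "lam dvd 1"
    and "residue_ne_inverse lam"
    and "constacyclic lam n C"
    and "free_code n C"
    and "Psi_generated_by lam n C F"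
    and "F dvd (monom 1 n - [:lam:])"
  shows "is_LCD n C"
proof -
  note fcr = assms(1)
  have G: "good TYPE('a)" using fcr by (rule fcr_good)
  have one0: "(0::'a) \<noteq> 1" using fcr by (simp add: finite_chain_ring_def)
  have L: "is_linear_code n C" using assms(4) by (simp add: constacyclic_def)
  obtain H where FH: "monom 1 n - [:lam:] = F * H" using assms(7) by (auto simp: dvd_def)
  have Cdef: "C = {c. length c = n \<and> (\<exists>g h. Poly c = g * F + h * (monom 1 n - [:lam:]))}"
    using assms(6) by (simp add: Psi_generated_by_def Psi_def)
  have Cchar: "c \<in> C \<longleftrightarrow> length c = n \<and> F dvd Poly c" for c
  proof -
    have "(\<exists>g h. Poly c = g * F + h * (monom 1 n - [:lam:])) \<longleftrightarrow> F dvd Poly c"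
    proof
      assume "\<exists>g h. Poly c = g * F + h * (monom 1 n - [:lam:])"
      then obtain g h where gh: "Poly c = g * F + h * (monom 1 n - [:lam:])" by blast
      then have "Poly c = F * (g + h * H)" unfolding FH by (simp add: algebra_simps)
      then show "F dvd Poly c" by (rule dvdI)
    next
      assume "F dvd Poly c"
      then obtain k where "Poly c = F * k" by (auto simp: dvd_def)
      then show "\<exists>g h. Poly c = g * F + h * (monom 1 n - [:lam:])"
        by (intro exI[of _ k] exI[of _ 0]) (simp add: mult.commute)
    qed
    then show ?thesis using Cdef by blast
  qed
  have zC: "replicate n 0 \<in> C" using Cchar by simp
  have zD: "replicate n 0 \<in> dual_code n C" by (simp add: dual_code_def inner_def)
  have main: "c = replicate n 0" if cC: "c \<in> C" and cD: "c \<in> dual_code n C" for c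
  proof (rule ccontr)
    assume cnz: "c \<noteq> replicate n 0"
    have lc: "length c = n" using cC Cchar by simp
    have n0: "n > 0" using cnz lc by (cases n) auto
    obtain \<gamma> :: 'a where gm: "\<gamma> \<in> max_ideal" and mr: "max_ideal = range ((*) \<gamma>)"
      using principal[OF fcr m_ideal[OF G]] by blast
    obtain k where gk: "\<gamma> ^ k = 0" using nilp[OF fcr gm] by blast
    define Pj where "Pj j \<longleftrightarrow> map ((*) (\<gamma> ^ j)) c \<noteq> replicate n 0" for j
    have m1: "map ((*) (1::'a)) c = c" by (induct c) simp_all
    have P0: "Pj 0" using cnz m1 by (simp add: Pj_def)
    have Pb: "\<forall>j. Pj j \<longrightarrow> j \<le> k"
    proof (intro allI impI)
      fix j assume "Pj j"
      show "j \<le> k"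
      proof (rule ccontr)
        assume "\<not> j \<le> k"
        then have "\<gamma> ^ j = \<gamma> ^ k * \<gamma> ^ (j - k)" by (simp add: power_add[symmetric])
        then have "\<gamma> ^ j = 0" using gk by simp
        then have "map ((*) (\<gamma> ^ j)) c = replicate n 0" using lc by (simp add: map_times0)
        then show False using \<open>Pj j\<close> by (simp add: Pj_def)
      qed
    qed
    obtain j where Pjj: "Pj j" and jmax: "\<forall>y. Pj y \<longrightarrow> y \<le> j"
      using Nat.ex_has_greatest_nat[of Pj 0 k, OF P0 Pb] by blast
    define c' where "c' = map ((*) (\<gamma> ^ j)) c"
    have c'C: "c' \<in> C" using lin_smul[OF L cC] by (simp add: c'_def)
    have c'D: "c' \<in> dual_code n C" using dual_scale[OF cD] by (simp add: c'_def)
    have c'nz: "c' \<noteq> replicate n 0" using Pjj by (simp add: Pj_def c'_def)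
    have lc': "length c' = n" using lc by (simp add: c'_def)
    have gc': "map ((*) \<gamma>) c' = replicate n 0"
    proof -
      have "\<not> Pj (Suc j)" using jmax by auto
      then have "map ((*) (\<gamma> ^ Suc j)) c = replicate n 0" by (simp add: Pj_def)
      moreover have "map ((*) \<gamma>) c' = map ((*) (\<gamma> ^ Suc j)) c"
        by (simp add: c'_def mult.assoc)
      ultimately show ?thesis by simp
    qed
    obtain B where Bs: "set B \<subseteq> C"
      and Bi: "\<forall>a. lincomb n a B = replicate n 0 \<longrightarrow> (\<forall>i<length B. a i = 0)"
      and Bspan: "\<forall>c\<in>C. \<exists>a. c = lincomb n a B"
      using assms(5) by (auto simp: free_code_def)
    obtain a where ca: "c' = lincomb n a B" using Bspan c'C by blast
    have "lincomb n (\<lambda>i. \<gamma> * a i) B = replicate n 0"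
      using gc' ca lincomb_scale[of \<gamma> n a B] by simp
    then have ga: "\<forall>i<length B. \<gamma> * a i = 0" using Bi by blast
    have AnnI: "is_ideal {x. \<gamma> * x = 0}"
      unfolding is_ideal_def by (auto simp: distrib_left mult.left_commute)
    obtain s where s: "\<gamma> * s = 0" and sr: "{x. \<gamma> * x = 0} = range ((*) s)"
      using principal[OF fcr AnnI] by blast
    have "\<exists>t. a i = s * t" if "i < length B" for i
    proof -
      have "a i \<in> {x. \<gamma> * x = 0}" using ga that by simp
      then show ?thesis unfolding sr by auto
    qed
    then obtain b where ab: "\<And>i. i < length B \<Longrightarrow> a i = s * b i" by metis
    define w where "w = lincomb n b B"
    have wC: "w \<in> C" unfolding w_def by (rule lincomb_in[OF L Bs])
    have lw: "length w = n" by (simp add: w_def length_lincomb)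
    have c'w: "c' = map ((*) s) w"
      unfolding ca w_def lincomb_scale by (rule lincomb_cong) (simp add: ab)
    have "\<exists>j0<n. w ! j0 \<notin> max_ideal"
    proof (rule ccontr)
      assume "\<not> (\<exists>j0<n. w ! j0 \<notin> max_ideal)"
      then have all: "\<And>j0. j0 < n \<Longrightarrow> w ! j0 \<in> range ((*) \<gamma>)" using mr by auto
      have "c' = replicate n 0"
      proof (rule nth_equalityI)
        show "length c' = length (replicate n (0::'a))" using lc' by simp
        fix i assume "i < length c'"
        then have i: "i < n" using lc' by simp
        obtain t where "w ! i = \<gamma> * t" using all[OF i] by auto
        then have "c' ! i = (\<gamma> * s) * t" using i lw by (simp add: c'w mult.commute mult.left_commute)
        then show "c' ! i = replicate n 0 ! i" using s i by simp
      qed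
      then show False using c'nz by simp
    qed
    then obtain j0 where j0: "j0 < n" "w ! j0 \<notin> max_ideal" by blast
    have orthm: "inner n w v \<in> max_ideal" if vC: "v \<in> C" for v
    proof (rule ccontr)
      assume "inner n w v \<notin> max_ideal"
      then obtain z where z: "1 = inner n w v * z" by (auto simp: max_ideal_def dvd_def)
      have "inner n c' v = 0" using c'D vC by (simp add: dual_code_def)
      then have "s * inner n w v = 0" using inner_scale[OF lw] c'w by simp
      then have "s = 0"
        by (metis z mult.assoc mult_1_right mult_zero_left)
      then have "c' = replicate n 0" using c'w lw by (simp add: map_times0)
      then show False using c'nz by simp
    qed
    define l where "l = resp lam"
    define f where "f = map_poly resp F"
    define h where "h = map_poly resp H"
    define W where "W = map_poly resp (Poly w)"
    obtain mu where lm: "1 = lam * mu" using assms(2) by (auto simp: dvd_def)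
    have lmu: "lam - mu \<notin> max_ideal" using assms(3) lm by (simp add: residue_ne_inverse_def)
    have l0: "l \<noteq> 0"
    proof -
      have "lam \<notin> max_ideal" using assms(2) by (simp add: max_ideal_def)
      then show ?thesis using resp_zero_iff[OF G] l_def by simp
    qed
    have l2: "l * l \<noteq> 1"
    proof
      assume ll: "l * l = 1"
      have lmu1: "l * resp mu = 1" using lm resp_mult[OF G, of lam mu] resp_1[OF G] l_def by simp
      have "l = l * (l * resp mu)" using lmu1 by simp
      also have "\<dots> = resp mu" using ll by (simp add: mult.assoc[symmetric])
      finally have "resp lam = resp mu" using l_def by simp
      then show False using lmu resp_eq[OF G] by simp
    qed
    have Pbar: "map_poly resp (monom 1 n - [:lam:]) = monom 1 n - [:l:]"
      by (simp add: mp_diff[OF G] mp_monom[OF G] mp_const[OF G] resp_1[OF G] l_def)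
    have fh: "f * h = monom 1 n - [:l:]"
      unfolding f_def h_def mp_mult[OF G, symmetric] FH[symmetric] by (rule Pbar)
    have cW: "coeff W i = resp (if i < n then w ! i else 0)" for i
      using lw by (simp add: W_def coeff_mp[OF G] nth_default_def)
    have dW: "degree W < n"
    proof -
      have "degree W \<le> n - 1"
        by (rule degree_le) (use n0 in \<open>auto simp: cW resp_0[OF G]\<close>)
      then show ?thesis using n0 by simp
    qed
    have fW: "f dvd W" unfolding f_def W_def
      by (rule mp_dvd[OF G]) (use wC Cchar in blast)
    have dPm: "degree (monom 1 n - [:lam:]) = n" "coeff (monom 1 n - [:lam:]) n = 1"
      using degree_Pm[OF n0 one0] by auto
    have dPl: "degree (monom 1 n - [:l:]) = n" using degree_P[OF n0] .
    have orth: "\<forall>k<n. (\<Sum>j<n. coeff W j * coeff ((monom 1 k * f) mod (monom 1 n - [:l:])) j) = 0"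
    proof (intro allI impI)
      fix k assume k: "k < n"
      obtain q r where qr: "monom 1 k * F = q * (monom 1 n - [:lam:]) + r" and dr: "degree r < n"
        using monic_divmod[of "monom 1 n - [:lam:]" "monom 1 k * F"] dPm n0 by auto
      define v where "v = map (coeff r) [0..<n]"
      have Pv: "Poly v = r" unfolding v_def using dr by (rule Poly_coeffs_n)
      have "r = F * (monom 1 k - q * H)"
        using qr unfolding FH by (simp add: algebra_simps)
      then have "F dvd Poly v" using Pv by simp
      then have vC: "v \<in> C" using Cchar by (simp add: v_def)
      have "resp (inner n w v) = 0" using orthm[OF vC] resp_zero_iff[OF G] by simp
      then have s0: "(\<Sum>j<n. resp (w ! j) * resp (coeff r j)) = 0"
        by (simp add: inner_def resp_sum[OF G] resp_mult[OF G] v_def)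
      have "map_poly resp (monom 1 k * F) = map_poly resp q * (monom 1 n - [:l:]) + map_poly resp r"
        using qr Pbar by (simp add: mp_mult[OF G] mp_add[OF G])
      moreover have "map_poly resp (monom 1 k * F) = monom 1 k * f"
        by (simp add: f_def mp_mult[OF G] mp_monom[OF G] resp_1[OF G])
      ultimately have e: "monom 1 k * f = map_poly resp q * (monom 1 n - [:l:]) + map_poly resp r" by simp
      have "degree (map_poly resp r) < degree (monom 1 n - [:l:])"
        using degree_mp[OF G, of r] dr dPl by simp
      then have "(monom 1 k * f) mod (monom 1 n - [:l:]) = map_poly resp r"
        unfolding e by (simp add: mod_poly_less)
      then show "(\<Sum>j<n. coeff W j * coeff ((monom 1 k * f) mod (monom 1 n - [:l:])) j) = 0"
        using s0 by (simp add: cW coeff_mp[OF G])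
    qed
    have "W = 0" using field_lemma[OF n0 l0 l2 fh dW fW orth] .
    moreover have "coeff W j0 \<noteq> 0" using j0 cW resp_zero_iff[OF G] by simp
    ultimately show False by simp
  qed
  show ?thesis unfolding is_LCD_def using zC zD main by blast
qed

end
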